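(* Let $D$ be an integral domain such that $D_M$ is a GCD domain for every maximal ideal $M$ of $D$, and suppose there is a family $\mathcal{F}$ of nonzero prime ideals of $D$ such that $D=\bigcap_{P\in\mathcal{F}}D_P$ with the intersection locally finite (every nonzero element of $D$ lies in only finitely many members of $\mathcal{F}$). If the ideal class group $Cl_d(D)$ (invertible fractional ideals modulo principal fractional ideals) is trivial, then $D$ is a GCD domain.
   Context: A GCD domain is an integral domain in which every pair of nonzero elements has a greatest common divisor, equivalently $aD\cap bD$ is principal for all nonzero $a,b$. *)

theory Defs
  imports Main
begin

text \<open>An integral domain D is represented as a subring of a field 'a
(every integral domain embeds into its field of fractions).  All ring-theoretic
notions below are relative to the subring D.\<close>

definition subring :: "'a::field set \<Rightarrow> bool" where
  "subring D \<longleftrightarrow> 0 \<in> D \<and> 1 \<in> D \<and>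
     (\<forall>x\<in>D. \<forall>y\<in>D. x + y \<in> D \<and> x - y \<in> D \<and> x * y \<in> D)"

definition frac_field :: "'a::field set \<Rightarrow> 'a set" where
  "frac_field D = {a / b | a b. a \<in> D \<and> b \<in> D \<and> b \<noteq> 0}"

definition ring_ideal :: "'a::field set \<Rightarrow> 'a set \<Rightarrow> bool" where
  "ring_ideal D I \<longleftrightarrow> I \<subseteq> D \<and> 0 \<in> I \<and>
     (\<forall>x\<in>I. \<forall>y\<in>I. x + y \<in> I) \<and> (\<forall>r\<in>D. \<forall>x\<in>I. r * x \<in> I)"

definition prime_ideal_in :: "'a::field set \<Rightarrow> 'a set \<Rightarrow> bool" where
  "prime_ideal_in D P \<longleftrightarrow> ring_ideal D P \<and> P \<noteq> D \<and>
     (\<forall>a\<in>D. \<forall>b\<in>D. a * b \<in> P \<longrightarrow> a \<in> P \<or> b \<in> P)"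

definition maximal_ideal_in :: "'a::field set \<Rightarrow> 'a set \<Rightarrow> bool" where
  "maximal_ideal_in D M \<longleftrightarrow> ring_ideal D M \<and> M \<noteq> D \<and>
     (\<forall>J. ring_ideal D J \<and> M \<subseteq> J \<longrightarrow> J = M \<or> J = D)"

definition localization :: "'a::field set \<Rightarrow> 'a set \<Rightarrow> 'a set" where
  "localization D P = {a / s | a s. a \<in> D \<and> s \<in> D \<and> s \<notin> P}"

definition rdvd :: "'a::field set \<Rightarrow> 'a \<Rightarrow> 'a \<Rightarrow> bool" where
  "rdvd R a b \<longleftrightarrow> (\<exists>c\<in>R. b = a * c)"

definition is_gcd_domain :: "'a::field set \<Rightarrow> bool" where
  "is_gcd_domain R \<longleftrightarrow>
     (\<forall>a\<in>R. \<forall>b\<in>R. a \<noteq> 0 \<longrightarrow> b \<noteq> 0 \<longrightarrow>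
        (\<exists>d\<in>R. rdvd R d a \<and> rdvd R d b \<and>
           (\<forall>e\<in>R. rdvd R e a \<and> rdvd R e b \<longrightarrow> rdvd R e d)))"

definition fractional_ideal :: "'a::field set \<Rightarrow> 'a set \<Rightarrow> bool" where
  "fractional_ideal D I \<longleftrightarrow> 0 \<in> I \<and> I \<noteq> {0} \<and>
     (\<forall>x\<in>I. \<forall>y\<in>I. x + y \<in> I) \<and> (\<forall>r\<in>D. \<forall>x\<in>I. r * x \<in> I) \<and>
     (\<exists>d\<in>D. d \<noteq> 0 \<and> (\<forall>x\<in>I. d * x \<in> D))"

definition frac_ideal_prod :: "'a::field set \<Rightarrow> 'a set \<Rightarrow> 'a set" where
  "frac_ideal_prod I J = {(\<Sum>i<n. f i * g i) | (n::nat) f g. (\<forall>i<n. f i \<in> I \<and> g i \<in> J)}"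

definition invertible_frac_ideal :: "'a::field set \<Rightarrow> 'a set \<Rightarrow> bool" where
  "invertible_frac_ideal D I \<longleftrightarrow> fractional_ideal D I \<and>
     (\<exists>J. fractional_ideal D J \<and> frac_ideal_prod I J = D)"

definition principal_frac_ideal :: "'a::field set \<Rightarrow> 'a set \<Rightarrow> bool" where
  "principal_frac_ideal D I \<longleftrightarrow> (\<exists>x. x \<noteq> 0 \<and> I = {x * r | r. r \<in> D})"

definition trivial_class_group :: "'a::field set \<Rightarrow> bool" where
  "trivial_class_group D \<longleftrightarrow>
     (\<forall>I. invertible_frac_ideal D I \<longrightarrow> principal_frac_ideal D I)"

end

theory Submission
  imports Defs
begin

lemma sr: assumes "subring D" shows "0 \<in> D" "1 \<in> D"
  "x \<in> D \<Longrightarrow> y \<in> D \<Longrightarrow> x + y \<in> D"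
  "x \<in> D \<Longrightarrow> y \<in> D \<Longrightarrow> x * y \<in> D"
  "x \<in> D \<Longrightarrow> y \<in> D \<Longrightarrow> x - y \<in> D"
  using assms unfolding subring_def by auto

lemma ideal_one: assumes "subring D" "ring_ideal D I" "1 \<in> I" shows "I = D"
proof
  show "I \<subseteq> D" using assms(2) by (simp add: ring_ideal_def)
  show "D \<subseteq> I"
  proof
    fix r assume "r \<in> D"
    then have "r * 1 \<in> I" using assms(2,3) unfolding ring_ideal_def by blast
    then show "r \<in> I" by simp
  qed
qed

lemma exists_maximal:
  assumes sD: "subring D" and A: "ring_ideal D A" and n1: "1 \<notin> A"
  shows "\<exists>M. maximal_ideal_in D M \<and> A \<subseteq> M"
proof -
  let ?S = "{K. ring_ideal D K \<and> A \<subseteq> K \<and> 1 \<notin> K}"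
  have "\<exists>M\<in>?S. \<forall>X\<in>?S. M \<subseteq> X \<longrightarrow> X = M"
  proof (rule subset_Zorn_nonempty)
    show "?S \<noteq> {}" using A n1 by blast
  next
    fix C assume Cne: "C \<noteq> {}" and ch: "subset.chain ?S C"
    from ch have CS: "C \<subseteq> ?S" and cmp: "\<And>x y. x \<in> C \<Longrightarrow> y \<in> C \<Longrightarrow> x \<subseteq> y \<or> y \<subseteq> x"
      unfolding subset.chain_def by auto
    from Cne obtain K0 where K0: "K0 \<in> C" by blast
    have "ring_ideal D (\<Union>C)"
      unfolding ring_ideal_def
    proof (intro conjI ballI)
      show "\<Union>C \<subseteq> D" using CS unfolding ring_ideal_def by blast
      show "0 \<in> \<Union>C" using CS K0 unfolding ring_ideal_def by blast
    next
      fix x y assume "x \<in> \<Union>C" "y \<in> \<Union>C"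
      then obtain K1 K2 where "K1 \<in> C" "K2 \<in> C" "x \<in> K1" "y \<in> K2" by blast
      then show "x + y \<in> \<Union>C" using cmp[of K1 K2] CS unfolding ring_ideal_def by blast
    next
      fix r x assume "r \<in> D" "x \<in> \<Union>C"
      then show "r * x \<in> \<Union>C" using CS unfolding ring_ideal_def by blast
    qed
    then show "\<Union>C \<in> ?S" using CS K0 by blast
  qed
  then obtain M where M: "M \<in> ?S" and mx: "\<forall>X\<in>?S. M \<subseteq> X \<longrightarrow> X = M" by blast
  have "maximal_ideal_in D M"
    unfolding maximal_ideal_in_def
  proof (intro conjI allI impI)
    show "ring_ideal D M" using M by simp
    show "M \<noteq> D" using M sr(2)[OF sD] by blast
  next
    fix J assume "ring_ideal D J \<and> M \<subseteq> J"
    then show "J = M \<or> J = D" using mx M ideal_one[OF sD, of J] by blast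
  qed
  then show ?thesis using M by blast
qed

lemma maximal_prime:
  assumes sD: "subring D" and M: "maximal_ideal_in D M"
  shows "prime_ideal_in D M"
  unfolding prime_ideal_in_def
proof (intro conjI ballI impI)
  have iM: "ring_ideal D M" and MD: "M \<noteq> D"
    and mx: "\<And>J. ring_ideal D J \<Longrightarrow> M \<subseteq> J \<Longrightarrow> J = M \<or> J = D"
    using M unfolding maximal_ideal_in_def by auto
  show "ring_ideal D M" "M \<noteq> D" by fact+
  fix a b assume a: "a \<in> D" and b: "b \<in> D" and ab: "a * b \<in> M"
  show "a \<in> M \<or> b \<in> M"
  proof (cases "a \<in> M")
    case True then show ?thesis by simp
  next
    case False
    then have aM: "a \<notin> M" .
    let ?J = "{m + a * r | m r. m \<in> M \<and> r \<in> D}"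
    have MsD: "M \<subseteq> D" using iM unfolding ring_ideal_def by simp
    have iJ: "ring_ideal D ?J"
      unfolding ring_ideal_def
    proof (intro conjI ballI)
      show "?J \<subseteq> D" using MsD a sr[OF sD] by blast
      show "0 \<in> ?J" using iM sr[OF sD] unfolding ring_ideal_def
        by (auto intro!: exI[of _ 0])
    next
      fix x y assume "x \<in> ?J" "y \<in> ?J"
      then obtain m1 r1 m2 r2 where "x = m1 + a*r1" "y = m2 + a * r2" "m1 \<in> M" "r1 \<in> D" "m2 \<in> M" "r2 \<in> D" by blast
      moreover have "x + y = (m1 + m2) + a * (r1 + r2)" using calculation by (simp add: algebra_simps)
      ultimately show "x + y \<in> ?J" using iM sr[OF sD] unfolding ring_ideal_def by blast
    next
      fix s x assume s: "s \<in> D" and "x \<in> ?J"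
      then obtain m1 r1 where "x = m1 + a*r1" "m1 \<in> M" "r1 \<in> D" by blast
      moreover have "s * x = s * m1 + a * (s * r1)" using calculation by (simp add: algebra_simps)
      ultimately show "s * x \<in> ?J" using iM sr[OF sD] s unfolding ring_ideal_def by blast
    qed
    have "M \<subseteq> ?J"
    proof
      fix m assume "m \<in> M" moreover have "m = m + a * 0" by simp
      ultimately show "m \<in> ?J" using sr(1)[OF sD] by blast
    qed
    moreover have "a \<in> ?J"
    proof -
      have "a = 0 + a * 1" by simp
      then show ?thesis using iM sr[OF sD] unfolding ring_ideal_def by blast
    qed
    ultimately have "?J = D" using mx[OF iJ] aM by blast
    then have "1 \<in> ?J" using sr(2)[OF sD] by simp
    then obtain m r where mr: "1 = m + a * r" "m \<in> M" "r \<in> D" by blast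
    then have "b = b * m + r * (a * b)" by (metis mult.commute mult.left_commute mult_1_right distrib_left)
    moreover have "b * m \<in> M" "r * (a * b) \<in> M" using iM b mr ab unfolding ring_ideal_def
      by (auto simp: mult.commute)
    ultimately have "b \<in> M" using iM unfolding ring_ideal_def by metis
    then show ?thesis by simp
  qed
qed

lemma prime_props:
  assumes sD: "subring D" and P: "prime_ideal_in D P"
  shows "1 \<notin> P" "P \<subseteq> D" "s \<in> D \<Longrightarrow> t \<in> D \<Longrightarrow> s \<notin> P \<Longrightarrow> t \<notin> P \<Longrightarrow> s * t \<notin> P"
  using P ideal_one[OF sD, of P] unfolding prime_ideal_in_def ring_ideal_def by auto


lemma loc_intro: "x \<in> D \<Longrightarrow> s \<in> D \<Longrightarrow> s \<notin> P \<Longrightarrow> x / s \<in> localization D P"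
  unfolding localization_def by blast

lemma loc_multD: assumes sD: "subring D" and y: "y \<in> localization D P" and u: "u \<in> D"
  shows "u * y \<in> localization D P"
proof -
  from y obtain a s where "y = a / s" "a \<in> D" "s \<in> D" "s \<notin> P" unfolding localization_def by blast
  moreover have "u * y = (u * a) / s" using calculation by simp
  ultimately show ?thesis using sr(4)[OF sD u] loc_intro by metis
qed

lemma loc_mono: "Q \<subseteq> P \<Longrightarrow> localization D P \<subseteq> localization D Q"
  unfolding localization_def by blast

lemma loc_mult: assumes sD: "subring D" and P: "prime_ideal_in D P"
  and y: "y \<in> localization D P" and z: "z \<in> localization D P"
  shows "y * z \<in> localization D P"
proof -
  from y obtain a s where 1: "y = a / s" "a \<in> D" "s \<in> D" "s \<notin> P" unfolding localization_def by blast
  from z obtain b t where 2: "z = b / t" "b \<in> D" "t \<in> D" "t \<notin> P" unfolding localization_def by blast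
  have "y * z = (a * b) / (s * t)" using 1 2 by simp
  then show ?thesis using prime_props(3)[OF sD P] 1 2 sr(4)[OF sD] loc_intro by metis
qed

lemma D_sub_loc: assumes sD: "subring D" and P: "prime_ideal_in D P"
  shows "D \<subseteq> localization D P"
proof
  fix x assume "x \<in> D"
  then have "x / 1 \<in> localization D P" using loc_intro sr(2)[OF sD] prime_props(1)[OF sD P] by metis
  then show "x \<in> localization D P" by simp
qed

lemma lcm_exists:
  fixes R :: "'a::field set"
  assumes mul: "\<And>x y. x \<in> R \<Longrightarrow> y \<in> R \<Longrightarrow> x * y \<in> R"
    and g: "is_gcd_domain R" and a: "a \<in> R" and b: "b \<in> R" and a0: "a \<noteq> 0" and b0: "b \<noteq> 0"
  shows "\<exists>l\<in>R. l \<noteq> 0 \<and> rdvd R a l \<and> rdvd R b l \<and> (\<forall>x\<in>R. rdvd R a x \<and> rdvd R b x \<longrightarrow> rdvd R l x)"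
proof -
  obtain d where d: "d \<in> R" "rdvd R d a" "rdvd R d b"
    and dg: "\<And>e. e \<in> R \<Longrightarrow> rdvd R e a \<Longrightarrow> rdvd R e b \<Longrightarrow> rdvd R e d"
    using g a b a0 b0 unfolding is_gcd_domain_def by blast
  from d obtain a1 b1 where a1: "a1 \<in> R" "a = d * a1" and b1: "b1 \<in> R" "b = d * b1"
    unfolding rdvd_def by blast
  have d0: "d \<noteq> 0" using a0 a1 by auto
  let ?l = "d * a1 * b1"
  have l0: "?l \<noteq> 0" using a0 b0 a1 b1 by auto
  have lR: "?l \<in> R" using mul d a1 b1 by blast
  have la: "rdvd R a ?l" using a1 b1 unfolding rdvd_def by auto
  have lb: "rdvd R b ?l" using a1 b1 unfolding rdvd_def by (auto simp: ac_simps)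
  have univ: "rdvd R ?l x" if x: "x \<in> R" and ax: "rdvd R a x" and bx: "rdvd R b x" for x
  proof (cases "x = 0")
    case True then have "0 = ?l * 0" by simp then show ?thesis using True mul x unfolding rdvd_def by (metis mult_zero_right)
  next
    case False
    from ax obtain v where v: "v \<in> R" "x = a * v" unfolding rdvd_def by blast
    from bx obtain u where u: "u \<in> R" "x = b * u" unfolding rdvd_def by blast
    have xa: "x * a \<in> R" "x * b \<in> R" using mul x a b by auto
    have xa0: "x * a \<noteq> 0" "x * b \<noteq> 0" using False a0 b0 by auto
    obtain g where gR: "g \<in> R" and g1: "rdvd R g (x*a)" and g2: "rdvd R g (x*b)"
      and gg: "\<And>e. e \<in> R \<Longrightarrow> rdvd R e (x*a) \<Longrightarrow> rdvd R e (x*b) \<Longrightarrow> rdvd R e g"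
      using g xa xa0 unfolding is_gcd_domain_def by blast
    have "rdvd R (x*d) (x*a)" "rdvd R (x*d) (x*b)" using a1 b1 unfolding rdvd_def by (auto simp: ac_simps)
    then have "rdvd R (x*d) g" using gg mul x d by blast
    then obtain h where h: "h \<in> R" "g = x * d * h" unfolding rdvd_def by blast
    from g1 obtain k1 where k1: "k1 \<in> R" "x * a = g * k1" unfolding rdvd_def by blast
    from g2 obtain k2 where k2: "k2 \<in> R" "x * b = g * k2" unfolding rdvd_def by blast
    have "a = d * h * k1" using k1 h False by (simp add: ac_simps)
    then have "rdvd R (d*h) a" using k1 unfolding rdvd_def by blast
    moreover have "b = d * h * k2" using k2 h False by (simp add: ac_simps)
    then have "rdvd R (d*h) b" using k2 unfolding rdvd_def by blast
    ultimately have "rdvd R (d*h) d" using dg mul d h by blast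
    then obtain m where m: "m \<in> R" "d = d * h * m" unfolding rdvd_def by blast
    have gxd: "x * d = g * m" using m h by (metis mult.assoc)
    have "x * a = (a * b) * u" using u by (simp add: ac_simps)
    moreover have "x * b = (a * b) * v" using v by (simp add: ac_simps)
    ultimately have "rdvd R (a*b) g" using gg mul a b u v unfolding rdvd_def by blast
    then obtain w where w: "w \<in> R" "g = a * b * w" unfolding rdvd_def by blast
    have "x * d = a * b * (w * m)" using gxd w by (simp add: ac_simps)
    then have "x * d = d * (?l * (w * m))" using a1 b1 by (simp add: ac_simps)
    then have "x = ?l * (w * m)" using d0 by simp
    then show ?thesis using mul w m unfolding rdvd_def by blast
  qed
  show ?thesis using lR l0 la lb univ by blast
qed


lemma local_lcm:
  assumes sD: "subring D" and M: "maximal_ideal_in D M" and g: "is_gcd_domain (localization D M)"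
    and a: "a \<in> D" and b: "b \<in> D" and a0: "a \<noteq> 0" and b0: "b \<noteq> 0"
  shows "\<exists>l\<in>{x\<in>D. rdvd D a x \<and> rdvd D b x}. l \<noteq> 0 \<and>
           (\<forall>x\<in>{x\<in>D. rdvd D a x \<and> rdvd D b x}. x / l \<in> localization D M)"
proof -
  let ?R = "localization D M"
  have P: "prime_ideal_in D M" using maximal_prime[OF sD M] .
  have mul: "\<And>x y. x \<in> ?R \<Longrightarrow> y \<in> ?R \<Longrightarrow> x * y \<in> ?R" using loc_mult[OF sD P] by blast
  have DR: "D \<subseteq> ?R" using D_sub_loc[OF sD P] .
  have 0: "0 \<in> M" using P unfolding prime_ideal_in_def ring_ideal_def by blast
  obtain l0 where l0R: "l0 \<in> ?R" and l00: "l0 \<noteq> 0" and la: "rdvd ?R a l0" and lb: "rdvd ?R b l0"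
    and lu: "\<And>x. x \<in> ?R \<Longrightarrow> rdvd ?R a x \<Longrightarrow> rdvd ?R b x \<Longrightarrow> rdvd ?R l0 x"
    using lcm_exists[OF mul g, of a b] a b a0 b0 DR by blast
  from la obtain u1 t1 where 1: "l0 = a * (u1 / t1)" "u1 \<in> D" "t1 \<in> D" "t1 \<notin> M"
    unfolding rdvd_def localization_def by blast
  from lb obtain u2 t2 where 2: "l0 = b * (u2 / t2)" "u2 \<in> D" "t2 \<in> D" "t2 \<notin> M"
    unfolding rdvd_def localization_def by blast
  have t0: "t1 \<noteq> 0" "t2 \<noteq> 0" using 0 1 2 by auto
  define l where "l = l0 * t1 * t2"
  have la': "l = a * (u1 * t2)" using 1 t0 unfolding l_def by simp
  have lb': "l = b * (u2 * t1)" using 2 t0 unfolding l_def by (simp add: ac_simps)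
  have lD: "l \<in> D" using la' sr(4)[OF sD] a 1 2 by metis
  have lI: "l \<in> {x\<in>D. rdvd D a x \<and> rdvd D b x}"
    using lD la' lb' sr(4)[OF sD] 1 2 unfolding rdvd_def by blast
  have l0': "l \<noteq> 0" using l00 t0 unfolding l_def by simp
  have "x / l \<in> ?R" if x: "x \<in> {x\<in>D. rdvd D a x \<and> rdvd D b x}" for x
  proof -
    have xR: "x \<in> ?R" using x DR by blast
    have "rdvd ?R a x" "rdvd ?R b x" using x DR unfolding rdvd_def by blast+
    then have "rdvd ?R l0 x" using lu xR by blast
    then obtain p q where pq: "x = l0 * (p / q)" "p \<in> D" "q \<in> D" "q \<notin> M"
      unfolding rdvd_def localization_def by blast
    have "x / l = p / (q * t1 * t2)" using pq t0 l00 unfolding l_def by (simp add: field_simps)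
    moreover have "q * t1 * t2 \<in> D" using pq 1 2 sr(4)[OF sD] by metis
    moreover have "q * t1 * t2 \<notin> M" using prime_props(3)[OF sD P] pq 1 2 sr(4)[OF sD] by metis
    ultimately show ?thesis using loc_intro pq by metis
  qed
  then show ?thesis using lI l0' by blast
qed


lemma sum_split: "(\<Sum>i<(n::nat)+m. h i) = (\<Sum>i<n. h i) + (\<Sum>i<m. h (n+i))"
  by (induct m) (auto simp: add.commute add.left_commute)

lemma prod_sub:
  assumes sD: "subring D" and IJ: "\<And>x y. x \<in> I \<Longrightarrow> y \<in> J \<Longrightarrow> x * y \<in> D"
  shows "frac_ideal_prod I J \<subseteq> D"
proof
  fix z assume "z \<in> frac_ideal_prod I J"
  then obtain n f g where z: "z = (\<Sum>i<(n::nat). f i * g i)" "\<forall>i<n. f i \<in> I \<and> g i \<in> J"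
    unfolding frac_ideal_prod_def by blast
  have "\<forall>i<n. f i \<in> I \<and> g i \<in> J \<Longrightarrow> (\<Sum>i<n. f i * g i) \<in> D" for n :: nat
    by (induct n) (auto simp: sr[OF sD] IJ)
  then show "z \<in> D" using z by blast
qed

lemma prod_ideal:
  assumes sD: "subring D" and IJ: "\<And>x y. x \<in> I \<Longrightarrow> y \<in> J \<Longrightarrow> x * y \<in> D"
    and Im: "\<And>r x. r \<in> D \<Longrightarrow> x \<in> I \<Longrightarrow> r * x \<in> I"
  shows "ring_ideal D (frac_ideal_prod I J)"
  unfolding ring_ideal_def
proof (intro conjI ballI)
  show "frac_ideal_prod I J \<subseteq> D" using prod_sub[OF sD IJ] .
  show "0 \<in> frac_ideal_prod I J" unfolding frac_ideal_prod_def
    by (rule CollectI, rule exI[of _ "0::nat"]) simp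
next
  fix x y assume "x \<in> frac_ideal_prod I J" "y \<in> frac_ideal_prod I J"
  then obtain n f g m f' g' where x: "x = (\<Sum>i<(n::nat). f i * g i)" "\<forall>i<n. f i \<in> I \<and> g i \<in> J"
    and y: "y = (\<Sum>i<(m::nat). f' i * g' i)" "\<forall>i<m. f' i \<in> I \<and> g' i \<in> J"
    unfolding frac_ideal_prod_def by blast
  define F where "F i = (if i < n then f i else f' (i - n))" for i
  define G where "G i = (if i < n then g i else g' (i - n))" for i
  have "(\<Sum>i<n+m. F i * G i) = (\<Sum>i<n. F i * G i) + (\<Sum>i<m. F (n+i) * G (n+i))"
    by (rule sum_split)
  also have "(\<Sum>i<n. F i * G i) = x" unfolding x F_def G_def by simp
  also have "(\<Sum>i<m. F (n+i) * G (n+i)) = y" unfolding y F_def G_def by simp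
  finally have "x + y = (\<Sum>i<n+m. F i * G i)" by simp
  moreover have "\<forall>i<n+m. F i \<in> I \<and> G i \<in> J" using x y unfolding F_def G_def by auto
  ultimately show "x + y \<in> frac_ideal_prod I J" unfolding frac_ideal_prod_def by blast
next
  fix r x assume r: "r \<in> D" and "x \<in> frac_ideal_prod I J"
  then obtain n f g where x: "x = (\<Sum>i<(n::nat). f i * g i)" "\<forall>i<n. f i \<in> I \<and> g i \<in> J"
    unfolding frac_ideal_prod_def by blast
  have "r * x = (\<Sum>i<n. (r * f i) * g i)" unfolding x by (simp add: sum_distrib_left ac_simps)
  moreover have "\<forall>i<n. r * f i \<in> I \<and> g i \<in> J" using x Im r by blast
  ultimately show "r * x \<in> frac_ideal_prod I J" unfolding frac_ideal_prod_def
    by (intro CollectI exI[of _ n] exI[of _ "\<lambda>i. r * f i"] exI[of _ g]) simp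
qed

lemma single_prod: "x \<in> I \<Longrightarrow> y \<in> J \<Longrightarrow> x * y \<in> frac_ideal_prod I J"
proof -
  assume "x \<in> I" "y \<in> J"
  moreover have "x * y = (\<Sum>i<(1::nat). (\<lambda>_. x) i * (\<lambda>_. y) i)" by simp
  ultimately show ?thesis unfolding frac_ideal_prod_def
    by (intro CollectI exI[of _ "1::nat"] exI[of _ "\<lambda>_. x"] exI[of _ "\<lambda>_. y"]) simp
qed

lemma prod_notin:
  assumes sD: "subring D" and P: "prime_ideal_in D P" and fin: "finite A"
    and t: "\<And>Q. Q \<in> A \<Longrightarrow> t Q \<in> D \<and> t Q \<notin> P"
  shows "prod t A \<in> D \<and> prod t A \<notin> P"
  using fin t
proof (induct A rule: finite_induct)
  case empty then show ?case using sr(2)[OF sD] prime_props(1)[OF sD P] by simp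
next
  case (insert x F)
  then show ?case using sr(4)[OF sD] prime_props(3)[OF sD P] by auto
qed


theorem mainTheorem19:
  fixes D :: "'a::field set" and \<F> :: "'a set set"
  assumes "subring D"
    and "\<And>M. maximal_ideal_in D M \<Longrightarrow> is_gcd_domain (localization D M)"
    and "\<And>P. P \<in> \<F> \<Longrightarrow> prime_ideal_in D P \<and> P \<noteq> {0}"
    and "D = {x \<in> frac_field D. \<forall>P\<in>\<F>. x \<in> localization D P}"
    and "\<And>x. x \<in> D \<Longrightarrow> x \<noteq> 0 \<Longrightarrow> finite {P \<in> \<F>. x \<in> P}"
    and "trivial_class_group D"
  shows "is_gcd_domain D"
  unfolding is_gcd_domain_def
proof (intro ballI impI)
  note sD = assms(1)
  fix a b assume a: "a \<in> D" and b: "b \<in> D" and a0: "a \<noteq> 0" and b0: "b \<noteq> 0"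
  define I where "I = {x\<in>D. rdvd D a x \<and> rdvd D b x}"
  define J where "J = {y. \<forall>x\<in>I. y * x \<in> D}"
  have abD: "a * b \<in> D" using sr(4)[OF sD a b] .
  have ab0: "a * b \<noteq> 0" using a0 b0 by simp
  have abI: "a * b \<in> I" unfolding I_def rdvd_def using abD a b by (auto simp: mult.commute)
  have ID: "I \<subseteq> D" unfolding I_def by blast
  have Im: "\<And>r x. r \<in> D \<Longrightarrow> x \<in> I \<Longrightarrow> r * x \<in> I"
  proof -
    fix r x assume r: "r \<in> D" and x: "x \<in> I"
    then obtain c1 c2 where "c1 \<in> D" "x = a * c1" "c2 \<in> D" "x = b * c2" "x \<in> D"
      unfolding I_def rdvd_def by blast
    moreover have "r * x = a * (r * c1)" "r * x = b * (r * c2)" using calculation by (simp_all add: ac_simps)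
    ultimately show "r * x \<in> I" unfolding I_def rdvd_def using sr(4)[OF sD] r by blast
  qed
  have IJ: "\<And>x y. x \<in> I \<Longrightarrow> y \<in> J \<Longrightarrow> x * y \<in> D" unfolding J_def by (metis (no_types, lifting) mem_Collect_eq mult.commute)
  have fI: "fractional_ideal D I"
    unfolding fractional_ideal_def
  proof (intro conjI ballI)
    have "0 = a * 0" "0 = b * 0" by simp_all
    then show "0 \<in> I" unfolding I_def rdvd_def using sr(1)[OF sD] by blast
    show "I \<noteq> {0}" using abI ab0 by blast
  next
    fix x y assume "x \<in> I" "y \<in> I"
    then obtain c1 c2 d1 d2 where "c1 \<in> D" "x = a * c1" "c2 \<in> D" "x = b * c2" "x \<in> D"
      "d1 \<in> D" "y = a * d1" "d2 \<in> D" "y = b * d2" "y \<in> D"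
      unfolding I_def rdvd_def by blast
    moreover have "x + y = a * (c1 + d1)" "x + y = b * (c2 + d2)" using calculation by (simp_all add: algebra_simps)
    ultimately show "x + y \<in> I" unfolding I_def rdvd_def using sr(3)[OF sD] by blast
  next
    fix r x assume "r \<in> D" "x \<in> I" then show "r * x \<in> I" using Im by blast
  next
    show "\<exists>d\<in>D. d \<noteq> 0 \<and> (\<forall>x\<in>I. d * x \<in> D)" using sr(2,4)[OF sD] ID by (auto intro!: bexI[of _ 1])
  qed
  have fJ: "fractional_ideal D J"
    unfolding fractional_ideal_def
  proof (intro conjI ballI)
    show "0 \<in> J" unfolding J_def using sr(1)[OF sD] by simp
    have "1 \<in> J" unfolding J_def using ID by auto
    then show "J \<noteq> {0}" by auto
  next
    fix x y assume "x \<in> J" "y \<in> J"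
    then show "x + y \<in> J" unfolding J_def using sr(3)[OF sD] by (simp add: distrib_right)
  next
    fix r x assume "r \<in> D" "x \<in> J"
    then show "r * x \<in> J" unfolding J_def using sr(4)[OF sD] by (simp add: mult.assoc)
  next
    show "\<exists>d\<in>D. d \<noteq> 0 \<and> (\<forall>x\<in>J. d * x \<in> D)"
    proof (intro bexI conjI ballI)
      fix y assume "y \<in> J" then show "a * b * y \<in> D" using abI unfolding J_def by (metis (no_types, lifting) mem_Collect_eq mult.commute)
    qed (use abD ab0 in auto)
  qed
  have iIJ: "ring_ideal D (frac_ideal_prod I J)" using prod_ideal[OF sD IJ Im] .
  have one: "1 \<in> frac_ideal_prod I J"
  proof (rule ccontr)
    assume n1: "1 \<notin> frac_ideal_prod I J"
    obtain M where M: "maximal_ideal_in D M" and IJM: "frac_ideal_prod I J \<subseteq> M"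
      using exists_maximal[OF sD iIJ n1] by blast
    have PM: "prime_ideal_in D M" using maximal_prime[OF sD M] .
    obtain l where lI: "l \<in> I" and l0: "l \<noteq> 0" and lM: "\<forall>x\<in>I. x / l \<in> localization D M"
      using local_lcm[OF sD M assms(2)[OF M] a b a0 b0] unfolding I_def by blast
    have lD: "l \<in> D" using lI ID by blast
    define FQ where "FQ = {P \<in> \<F>. l \<in> P}"
    have finFQ: "finite FQ" unfolding FQ_def using assms(5)[OF lD l0] .
    have ex: "\<exists>t. t \<in> D \<and> t \<notin> M \<and> (\<forall>x\<in>I. t * x / l \<in> localization D Q)" if Q: "Q \<in> FQ" for Q
    proof -
      have PQ: "prime_ideal_in D Q" using assms(3) Q unfolding FQ_def by blast
      have "1 \<notin> Q" using prime_props(1)[OF sD PQ] .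
      moreover have "ring_ideal D Q" using PQ unfolding prime_ideal_in_def by blast
      ultimately obtain M' where M': "maximal_ideal_in D M'" and QM': "Q \<subseteq> M'"
        using exists_maximal[OF sD] by blast
      obtain c where cI: "c \<in> I" and c0: "c \<noteq> 0" and cM: "\<forall>x\<in>I. x / c \<in> localization D M'"
        using local_lcm[OF sD M' assms(2)[OF M'] a b a0 b0] unfolding I_def by blast
      have "c / l \<in> localization D M" using lM cI by blast
      then obtain u t where ut: "c / l = u / t" "u \<in> D" "t \<in> D" "t \<notin> M"
        unfolding localization_def by blast
      have t0: "t \<noteq> 0" using ut PM unfolding prime_ideal_in_def ring_ideal_def by auto
      have "t * x / l \<in> localization D Q" if x: "x \<in> I" for x
      proof -
        have "x / c \<in> localization D Q" using cM x loc_mono[OF QM'] by blast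
        then have "u * (x / c) \<in> localization D Q" using loc_multD[OF sD] ut by blast
        moreover have "u = t * c / l" using ut t0 l0 by (simp add: field_simps)
        then have "u * (x / c) = t * x / l" using c0 by simp
        ultimately show ?thesis by simp
      qed
      then show ?thesis using ut by blast
    qed
    then obtain tf where tf: "\<And>Q. Q \<in> FQ \<Longrightarrow> tf Q \<in> D \<and> tf Q \<notin> M \<and> (\<forall>x\<in>I. tf Q * x / l \<in> localization D Q)"
      by metis
    define s where "s = prod tf FQ"
    have sDM: "s \<in> D \<and> s \<notin> M" unfolding s_def using prod_notin[OF sD PM finFQ] tf by blast
    have "s / l \<in> J" unfolding J_def
    proof (intro CollectI ballI)
      fix x assume x: "x \<in> I"
      have xD: "x \<in> D" using x ID by blast
      have sx: "s * x \<in> D" using sDM xD sr(4)[OF sD] by blast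
      have e: "s / l * x = (s * x) / l" by simp
      have "s / l * x \<in> frac_field D" unfolding e frac_field_def using sx lD l0 by blast
      moreover have "s / l * x \<in> localization D P" if P: "P \<in> \<F>" for P
      proof (cases "l \<in> P")
        case True
        then have PF: "P \<in> FQ" unfolding FQ_def using P by blast
        have "s = tf P * prod tf (FQ - {P})" unfolding s_def using prod.remove[OF finFQ PF] .
        then have "s / l * x = prod tf (FQ - {P}) * (tf P * x / l)" by (simp add: ac_simps)
        moreover have "prod tf (FQ - {P}) \<in> D"
          using prod_notin[OF sD PM, of "FQ - {P}" tf] finFQ tf by blast
        ultimately show ?thesis using loc_multD[OF sD] tf[OF PF] x by metis
      next
        case False
        then show ?thesis unfolding e using loc_intro sx lD by metis
      qed
      ultimately have "s / l * x \<in> {x \<in> frac_field D. \<forall>P\<in>\<F>. x \<in> localization D P}" by blast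
      then show "s / l * x \<in> D" using assms(4) by blast
    qed
    then have "l * (s / l) \<in> frac_ideal_prod I J" using single_prod lI by blast
    then have "s \<in> M" using IJM l0 by auto
    then show False using sDM by blast
  qed
  have "frac_ideal_prod I J = D"
  proof
    show "frac_ideal_prod I J \<subseteq> D" using iIJ unfolding ring_ideal_def by blast
    show "D \<subseteq> frac_ideal_prod I J" using ideal_one[OF sD iIJ one] by simp
  qed
  then have "invertible_frac_ideal D I" unfolding invertible_frac_ideal_def using fI fJ by blast
  then obtain x where x0: "x \<noteq> 0" and Ix: "I = {x * r | r. r \<in> D}"
    using assms(6) unfolding trivial_class_group_def principal_frac_ideal_def by blast
  have xI: "x \<in> I" unfolding Ix using sr(2)[OF sD] by (auto intro!: exI[of _ 1])
  from abI obtain d where d: "d \<in> D" "a * b = x * d" unfolding Ix by blast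
  from xI obtain c1 c2 where c: "c1 \<in> D" "x = a * c1" "c2 \<in> D" "x = b * c2" "x \<in> D"
    unfolding I_def rdvd_def by blast
  have "a = d * c2" using d c b0 x0 by (metis mult.commute mult.left_commute mult_cancel_left)
  then have da: "rdvd D d a" using c unfolding rdvd_def by blast
  have "b = d * c1" using d c a0 x0 by (metis mult.commute mult.left_commute mult_cancel_left)
  then have db: "rdvd D d b" using c unfolding rdvd_def by blast
  have du: "rdvd D e d" if e: "e \<in> D" and ea: "rdvd D e a" and eb: "rdvd D e b" for e
  proof -
    from ea eb obtain a2 b2 where ab2: "a2 \<in> D" "a = e * a2" "b2 \<in> D" "b = e * b2"
      unfolding rdvd_def by blast
    have e0: "e \<noteq> 0" using a0 ab2 by auto
    have "e * a2 * b2 \<in> I" unfolding I_def rdvd_def using ab2 sr(4)[OF sD] e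
      by (auto simp: ac_simps)
    then obtain t where t: "t \<in> D" "e * a2 * b2 = x * t" unfolding Ix by blast
    have "x * d = a * b" using d(2) by simp
    also have "\<dots> = e * (e * a2 * b2)" using ab2 by (simp add: ac_simps)
    also have "\<dots> = e * (x * t)" using t by simp
    finally have "x * d = x * (e * t)" by (simp add: ac_simps)
    then have "d = e * t" using x0 by simp
    then show ?thesis using t unfolding rdvd_def by blast
  qed
  show "\<exists>d\<in>D. rdvd D d a \<and> rdvd D d b \<and> (\<forall>e\<in>D. rdvd D e a \<and> rdvd D e b \<longrightarrow> rdvd D e d)"
    using d da db du by blast
qed

end
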